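(* Let $C=4+\frac{2}{\log2}$ and $x_n^*=\left\lfloor\sqrt{\frac{Cn}{\log n}}\right\rfloor$. For all sufficiently large $n$, $$\Big|\mu(N_n(x)\ge1)-\big[1-(1-\pi_x)^n\big]\Big|\le n^{-0.2}\qquad\text{for all } x=1,2,\dots,x_n^*.$$
   Context: $\mu$ is the Gauss measure on $(0,1)$, $d\mu(\omega)=\frac{d\omega}{(\log 2)(1+\omega)}$. For irrational $\omega\in(0,1)$, $a_i(\omega)$ denote its continued fraction partial quotients, and $N_n(x)=N_n(x,\omega)=\#\{1\le i\le n: a_i(\omega)=x\}$. For $x\in\mathbb{N}$, $\pi_x=\mu(a_1=x)=-\log_2\!\big(1-\frac{1}{(x+1)^2}\big)$. *)

theory Defs
  imports "HOL-Probability.Probability"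
begin

definition gauss_measure :: "real measure" where
  "gauss_measure = density lborel
     (\<lambda>w. ennreal (indicator {0<..<1} w / (ln 2 * (1 + w))))"

definition gauss_map :: "real \<Rightarrow> real" where
  "gauss_map w = frac (1 / w)"

definition cf_quot :: "nat \<Rightarrow> real \<Rightarrow> nat" where
  "cf_quot i w = nat \<lfloor>1 / (gauss_map ^^ (i - 1)) w\<rfloor>"

definition N_count :: "nat \<Rightarrow> nat \<Rightarrow> real \<Rightarrow> nat" where
  "N_count n x w = card {i \<in> {1..n}. cf_quot i w = x}"

definition pi_cf :: "nat \<Rightarrow> real" where
  "pi_cf x = - log 2 (1 - 1 / (real x + 1)^2)"

end

theory Submission
  imports Defs "HOL-Real_Asymp.Real_Asymp"
begin

lemma irr_floor_pos:
  assumes w: "w \<in> {0<..<1} - \<rat>"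
  shows "cf_quot 1 w \<ge> 1" "real (cf_quot 1 w) < 1/w" "1/w < real (cf_quot 1 w) + 1"
    "gauss_map w = 1/w - real (cf_quot 1 w)" "gauss_map w \<in> {0<..<1} - \<rat>"
proof -
  have w0: "0 < w" "w < 1" "w \<notin> \<rat>" using w by auto
  have g1: "1/w > 1" using w0 by simp
  have fl: "\<lfloor>1/w\<rfloor> \<ge> 1" using g1 by (simp add: one_le_floor)
  have c: "real (cf_quot 1 w) = of_int \<lfloor>1/w\<rfloor>" proof -
    have "0 \<le> \<lfloor>1/w\<rfloor>" using fl by linarith
    then show ?thesis unfolding cf_quot_def by simp
  qed
  have "real (cf_quot 1 w) \<ge> 1" using c fl by linarith
  then show "cf_quot 1 w \<ge> 1" by simp
  have nq: "1/w \<notin> \<rat>" using w0 by (metis Rats_divide Rats_1 div_self divide_divide_eq_right divide_self_if mult_1 nonzero_divide_eq_eq one_divide_eq_0_iff times_divide_eq_left)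
  have ne: "of_int \<lfloor>1/w\<rfloor> \<noteq> 1/w" using nq by (metis Rats_of_int)
  show "real (cf_quot 1 w) < 1/w" using c ne of_int_floor_le[of "1/w"] by linarith
  show "1/w < real (cf_quot 1 w) + 1" using c real_of_int_floor_add_one_gt[of "1/w"] by linarith
  show gm: "gauss_map w = 1/w - real (cf_quot 1 w)" using c by (simp add: gauss_map_def frac_def)
  have "gauss_map w \<notin> \<rat>"
  proof
    assume "gauss_map w \<in> \<rat>"
    then have "gauss_map w + real (cf_quot 1 w) \<in> \<rat>" by (simp add: Rats_add)
    then show False using gm nq by simp
  qed
  moreover have "gauss_map w > 0" using gm c ne of_int_floor_le[of "1/w"] by linarith
  moreover have "gauss_map w < 1" using gm c real_of_int_floor_add_one_gt[of "1/w"] by linarith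
  ultimately show "gauss_map w \<in> {0<..<1} - \<rat>" by auto
qed

lemma cf_quot_Suc: "i \<ge> 1 \<Longrightarrow> cf_quot (Suc i) w = cf_quot i (gauss_map w)"
  by (cases i) (simp_all add: cf_quot_def funpow_Suc_right del: funpow.simps)

lemma gauss_map_meas[measurable]: "gauss_map \<in> borel_measurable borel"
  unfolding gauss_map_def frac_def by measurable

lemma funpow_gauss_meas[measurable]: "(gauss_map ^^ k) \<in> borel_measurable borel"
  by (induction k) (simp_all add: measurable_ident_sets measurable_comp[OF _ gauss_map_meas])

lemma cf_quot_meas: "{w. cf_quot i w = x} \<in> sets borel"
proof -
  have "{w. cf_quot i w = x} = (\<lambda>w. \<lfloor>1 / (gauss_map ^^ (i - 1)) w\<rfloor>) -` {z. nat z = x}"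
    by (auto simp: cf_quot_def)
  also have "\<dots> \<in> sets borel"
  proof -
    have "(\<lambda>w. \<lfloor>1 / (gauss_map ^^ (i - 1)) w\<rfloor>) \<in> measurable borel (count_space UNIV)"
      by measurable
    then show ?thesis using measurable_sets[of _ borel "count_space UNIV" "{z. nat z = x}"] by simp
  qed
  finally show ?thesis .
qed

definition Eset :: "nat \<Rightarrow> nat \<Rightarrow> real set" where
  "Eset x n = {w \<in> {0<..<1} - \<rat>. \<forall>i\<in>{1..n}. cf_quot i w \<noteq> x}"

lemma Eset_meas[measurable]: "Eset x n \<in> sets borel"
proof -
  have "Eset x n = ({0<..<1} - \<rat>) \<inter> (\<Inter>i\<in>{1..n}. - {w. cf_quot i w = x})"
    by (auto simp: Eset_def)
  moreover have "(\<rat>::real set) \<in> sets lborel" by (rule null_setsD2[OF countable_imp_null_set_lborel[OF countable_rat]])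
  hence "(\<rat>::real set) \<in> sets borel" by simp
  ultimately show ?thesis using cf_quot_meas by auto
qed

lemma Eset_sub: "Eset x n \<subseteq> {0<..<1} - \<rat>" by (auto simp: Eset_def)

lemma Eset_Suc:
  assumes "w \<in> Eset x (Suc n)"
  shows "cf_quot 1 w \<noteq> x" "gauss_map w \<in> Eset x n"
proof -
  have w: "w \<in> {0<..<1} - \<rat>" and a: "\<forall>i\<in>{1..Suc n}. cf_quot i w \<noteq> x" using assms by (auto simp: Eset_def)
  show "cf_quot 1 w \<noteq> x" using a by auto
  have "\<forall>i\<in>{1..n}. cf_quot i (gauss_map w) \<noteq> x"
    using a cf_quot_Suc by (metis atLeastAtMost_iff Suc_le_mono le_SucI)
  then show "gauss_map w \<in> Eset x n" using irr_floor_pos(5)[OF w] by (simp add: Eset_def)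
qed


definition hh :: "real \<Rightarrow> real \<Rightarrow> real" where "hh s t = (1+s)/(1+s*t)^2"
definition pp :: "real \<Rightarrow> real \<Rightarrow> real" where "pp a s = (1+s)/((a+s)*(a+1+s))"

lemma aux_div2: "P \<noteq> 0 \<Longrightarrow> R \<noteq> 0 \<Longrightarrow> (c::real)/(P*R) * (R/P) * (P^2/Q^2) = c/Q^2"
  by (simp add: field_simps power2_eq_square)

lemma pp_hh: "a \<ge> 1 \<Longrightarrow> s \<ge> 0 \<Longrightarrow> u \<ge> 0 \<Longrightarrow> pp a s * hh (1/(a+s)) u = (1+s)/(a+s+u)^2"
proof -
  assume a: "a \<ge> 1" and s: "s \<ge> 0" and u: "u \<ge> 0"
  have p: "a + s > 0" using a s by linarith
  have e1: "1 + 1/(a+s) = (a+1+s)/(a+s)" using p by (simp add: field_simps)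
  have e2: "1 + 1/(a+s) * u = (a+s+u)/(a+s)" using p by (simp add: field_simps)
  have "pp a s * hh (1/(a+s)) u = (1+s)/((a+s)*(a+1+s)) * ((a+1+s)/(a+s)) * ((a+s)^2/(a+s+u)^2)"
    unfolding pp_def hh_def e1 e2 by (simp add: power_divide ac_simps)
  also have "\<dots> = (1+s)/(a+s+u)^2"
    by (rule aux_div2) (use p in auto)
  finally show ?thesis .
qed

lemma aux_div: "P \<noteq> 0 \<Longrightarrow> Q \<noteq> 0 \<Longrightarrow> (c::real)/(Q/P)^2 * (1/P^2) = c/Q^2"
  by (simp add: power_divide field_simps)

lemma subst_term:
  fixes a s :: real and A :: "real set"
  assumes A[measurable]: "A \<in> sets borel" and As: "A \<subseteq> {0<..<1}" and a: "a \<ge> 1" and s: "s \<ge> 0"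
  shows "(\<integral>\<^sup>+t. ennreal (indicator {1/(a+1)..1/a} t * indicator A (1/t - a) * hh s t) \<partial>lborel)
       = ennreal (pp a s) * (\<integral>\<^sup>+u. ennreal (indicator A u * hh (1/(a+s)) u) \<partial>lborel)"
proof -
  define g where "g v = 1/(a+1-v)" for v :: real
  define g' where "g' v = 1/(a+1-v)^2" for v :: real
  define f where "f t = indicator A (1/t - a) * hh s t" for t :: real
  have g0: "g 0 = 1/(a+1)" and g1: "g 1 = 1/a" by (simp_all add: g_def)
  have "(\<integral>\<^sup>+x. f x * indicator {g 0..g 1} x \<partial>lborel) =
             (\<integral>\<^sup>+x. f (g x) * g' x * indicator {0..1} x \<partial>lborel)"
  proof (rule nn_integral_substitution)
    show "set_borel_measurable borel {g 0..g 1} f" unfolding f_def hh_def set_borel_measurable_def by measurable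
    show "(g has_real_derivative g' x) (at x)" if "x \<in> {0..1}" for x
    proof -
      have "a + 1 - x \<noteq> 0" using that a by auto
      then show ?thesis unfolding g_def g'_def
        by (auto intro!: derivative_eq_intros simp: power2_eq_square field_simps)
    qed
    show "continuous_on {0..1} g'" unfolding g'_def using a
      by (intro continuous_intros) auto
    show "0 \<le> g' x" for x unfolding g'_def by simp
  qed simp
  moreover have "(\<integral>\<^sup>+t. ennreal (indicator {1/(a+1)..1/a} t * indicator A (1/t - a) * hh s t) \<partial>lborel)
      = (\<integral>\<^sup>+x. f x * indicator {g 0..g 1} x \<partial>lborel)"
    unfolding g0 g1 f_def by (simp add: ac_simps)
  ultimately have eq1: "(\<integral>\<^sup>+t. ennreal (indicator {1/(a+1)..1/a} t * indicator A (1/t - a) * hh s t) \<partial>lborel)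
      = (\<integral>\<^sup>+x. f (g x) * g' x * indicator {0..1} x \<partial>lborel)" by simp
  have eq2: "(\<integral>\<^sup>+x. f (g x) * g' x * indicator {0..1} x \<partial>lborel)
     = (\<integral>\<^sup>+x. ennreal (indicator A (1-x) * ((1+s)/(a+s+(1-x))^2) * indicator {0..1} x) \<partial>lborel)"
  proof (rule nn_integral_cong)
    fix x :: real
    show "ennreal (f (g x) * g' x * indicator {0..1} x) =
          ennreal (indicator A (1-x) * ((1+s)/(a+s+(1-x))^2) * indicator {0..1} x)"
    proof (cases "x \<in> {0..1}")
      case True
      then have pos: "a + 1 - x > 0" using a by auto
      have "1 / g x - a = 1 - x" using pos by (simp add: g_def)
      moreover have "hh s (g x) * g' x = (1+s)/(a+s+(1-x))^2"
      proof -
        have q: "a+s+(1-x) > 0" using pos s by linarith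
        have e: "1 + s * (1/(a+1-x)) = (a+s+(1-x))/(a+1-x)" using pos by (simp add: field_simps)
        have "hh s (g x) * g' x = (1+s) / ((a+s+(1-x))/(a+1-x))^2 * (1/(a+1-x)^2)"
          unfolding hh_def g_def g'_def e by simp
        also have "\<dots> = (1+s)/(a+s+(1-x))^2" using pos q by (intro aux_div) auto
        finally show ?thesis .
      qed
      ultimately show ?thesis unfolding f_def by (simp add: mult.assoc)
    qed simp
  qed
  have eq3: "(\<integral>\<^sup>+x. ennreal (indicator A (1-x) * ((1+s)/(a+s+(1-x))^2) * indicator {0..1} x) \<partial>lborel)
     = (\<integral>\<^sup>+u. ennreal (indicator A u * ((1+s)/(a+s+u)^2) * indicator {0..1} (1-u)) \<partial>lborel)"
    by (subst nn_integral_real_affine[where c="-1" and t=1]) (simp_all add: mult.assoc)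
  have eq4: "(\<integral>\<^sup>+u. ennreal (indicator A u * ((1+s)/(a+s+u)^2) * indicator {0..1} (1-u)) \<partial>lborel)
     = (\<integral>\<^sup>+u. ennreal (pp a s) * ennreal (indicator A u * hh (1/(a+s)) u) \<partial>lborel)"
  proof (rule nn_integral_cong)
    fix u :: real
    show "ennreal (indicator A u * ((1+s)/(a+s+u)^2) * indicator {0..1} (1-u)) =
         ennreal (pp a s) * ennreal (indicator A u * hh (1/(a+s)) u)"
    proof (cases "u \<in> A")
      case True
      then have u: "0 < u" "u < 1" using As by auto
      have pa: "pp a s \<ge> 0" using a s by (simp add: pp_def)
      have "0 \<le> 1/(a+s)" using a s by simp
      then have hpos: "hh (1/(a+s)) u \<ge> 0" by (simp add: hh_def)
      show ?thesis using True u pp_hh[OF a s, of u] pa hpos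
        by (simp add: ennreal_mult[symmetric] mult.assoc)
    qed simp
  qed
  show ?thesis unfolding eq1 eq2 eq3 eq4
    by (rule nn_integral_cmult) (unfold hh_def, measurable)
qed


definition Ii :: "nat \<Rightarrow> nat \<Rightarrow> real \<Rightarrow> ennreal" where
  "Ii x n s = (\<integral>\<^sup>+t. ennreal (indicator (Eset x n) t * hh s t) \<partial>lborel)"

lemma ennreal_le_suminf_term: "(f::nat \<Rightarrow> ennreal) k \<le> suminf f"
  using sum_le_suminf[OF summableI, of "{k}" f] by simp

lemma Ii_rec:
  assumes s: "s \<ge> 0"
  shows "Ii x (Suc n) s \<le> (\<Sum>k. ennreal (if Suc k \<noteq> x then pp (real k + 1) s else 0) * Ii x n (1/(real k + 1 + s)))"
proof -
  define T where "T k t = ennreal (if Suc k \<noteq> x then indicator {1/(real k + 1 + 1)..1/(real k + 1)} t *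
          indicator (Eset x n) (1/t - (real k + 1)) * hh s t else 0)" for k t
  have pt: "ennreal (indicator (Eset x (Suc n)) t * hh s t) \<le> (\<Sum>k. T k t)" for t
  proof (cases "t \<in> Eset x (Suc n)")
    case True
    then have tirr: "t \<in> {0<..<1} - \<rat>" by (auto simp: Eset_def)
    note fp = irr_floor_pos[OF tirr]
    define a where "a = cf_quot 1 t"
    define k where "k = a - 1"
    have k: "a = Suc k" using fp(1) unfolding a_def k_def by simp
    have ra: "real a = real k + 1" using k by simp
    have t0: "t > 0" using tirr by auto
    have i1: "1/(real k + 1 + 1) \<le> t"
    proof -
      have "1/t < real k + 1 + 1" using fp(3) ra a_def by simp
      then show ?thesis using t0 by (simp add: field_simps)
    qed
    have i2: "t \<le> 1/(real k + 1)"
    proof -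
      have "real k + 1 < 1/t" using fp(2) ra a_def by simp
      then show ?thesis using t0 by (simp add: field_simps)
    qed
    have gE: "1/t - (real k + 1) \<in> Eset x n" using Eset_Suc(2)[OF True] fp(4) ra a_def by simp
    have nx: "Suc k \<noteq> x" using Eset_Suc(1)[OF True] k a_def by simp
    have "T k t = ennreal (hh s t)" using i1 i2 gE nx by (simp add: T_def)
    then show ?thesis using True ennreal_le_suminf_term[of "\<lambda>k. T k t" k] by simp
  qed simp
  have "Ii x (Suc n) s \<le> (\<integral>\<^sup>+t. (\<Sum>k. T k t) \<partial>lborel)"
    unfolding Ii_def by (rule nn_integral_mono) (rule pt)
  also have "\<dots> = (\<Sum>k. \<integral>\<^sup>+t. T k t \<partial>lborel)"
    by (rule nn_integral_suminf) (unfold T_def hh_def, measurable)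
  also have "\<dots> = (\<Sum>k. ennreal (if Suc k \<noteq> x then pp (real k + 1) s else 0) * Ii x n (1/(real k + 1 + s)))"
  proof (rule suminf_cong)
    fix k
    show "(\<integral>\<^sup>+t. T k t \<partial>lborel) = ennreal (if Suc k \<noteq> x then pp (real k + 1) s else 0) * Ii x n (1/(real k + 1 + s))"
    proof (cases "Suc k \<noteq> x")
      case True
      then show ?thesis unfolding T_def Ii_def
        using subst_term[OF Eset_meas _ _ s, of x n "real k + 1"] Eset_sub[of x n] by auto
    qed (simp add: T_def)
  qed
  finally show ?thesis .
qed


lemma hh_le2: "s \<in> {0..1} \<Longrightarrow> t \<in> {0<..<1} \<Longrightarrow> hh s t \<le> 2"
proof -
  assume s: "s \<in> {0..1}" and t: "t \<in> {0<..<1}"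
  have "1 \<le> (1 + s*t)^2" using s t by (simp add: one_le_power)
  then have "(1+s)/(1+s*t)^2 \<le> (1+s)/1" using s by (intro divide_left_mono) auto
  then show ?thesis using s unfolding hh_def by simp
qed

lemma Ii0: assumes s: "s \<in> {0..1}" shows "Ii x 0 s \<le> 2"
proof -
  have "Ii x 0 s \<le> (\<integral>\<^sup>+t. ennreal (2 * indicator {0<..<1::real} t) \<partial>lborel)"
    unfolding Ii_def
  proof (intro nn_integral_mono)
    fix t
    show "ennreal (indicator (Eset x 0) t * hh s t) \<le> ennreal (2 * indicator {0<..<1::real} t)"
    proof (rule ennreal_leI)
      show "indicator (Eset x 0) t * hh s t \<le> 2 * indicator {0<..<1::real} t"
      proof (cases "t \<in> Eset x 0")
        case True
        then have t: "t \<in> {0<..<1}" by (auto simp: Eset_def)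
        then have "hh s t \<le> 2" using hh_le2[OF s] by simp
        then show ?thesis using True t by simp
      qed simp
    qed
  qed
  also have "\<dots> = (\<integral>\<^sup>+t. 2 * indicator {0<..<1::real} t \<partial>lborel)"
    by (intro nn_integral_cong) (simp add: indicator_def)
  also have "\<dots> = 2" by (simp add: nn_integral_cmult_indicator)
  finally show ?thesis .
qed

lemma Ii_bound:
  fixes \<phi> :: "real \<Rightarrow> real" and \<rho> :: real
  assumes phi1: "\<And>s. s \<in> {0..1} \<Longrightarrow> 1 \<le> \<phi> s"
    and step: "\<And>s. s \<in> {0..1} \<Longrightarrow>
       (\<Sum>k. ennreal (if Suc k \<noteq> x then pp (real k + 1) s * \<phi> (1/(real k + 1 + s)) else 0)) \<le> ennreal ((1-\<rho>) * \<phi> s)"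
    and r0: "0 \<le> \<rho>" and r1: "\<rho> \<le> 1"
  shows "s \<in> {0..1} \<Longrightarrow> Ii x n s \<le> ennreal (2 * (1-\<rho>)^n * \<phi> s)"
proof (induction n arbitrary: s)
  case 0
  then have "Ii x 0 s \<le> 2" by (rule Ii0)
  also have "2 \<le> ennreal (2 * (1-\<rho>)^0 * \<phi> s)"
  proof -
    have "ennreal 2 \<le> ennreal (2 * (1-\<rho>)^0 * \<phi> s)" using phi1[OF 0] by (intro ennreal_leI) simp
    then show ?thesis by simp
  qed
  finally show ?case .
next
  case (Suc n)
  have s0: "s \<ge> 0" using Suc.prems by auto
  have sk: "1/(real k + 1 + s) \<in> {0..1}" for k using s0 by (auto simp: field_simps)
  have ppn: "pp (real k + 1) s \<ge> 0" for k using s0 by (simp add: pp_def)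
  have c0: "2 * (1-\<rho>)^n \<ge> 0" using r1 by simp
  have "Ii x (Suc n) s \<le> (\<Sum>k. ennreal (if Suc k \<noteq> x then pp (real k + 1) s else 0) * Ii x n (1/(real k + 1 + s)))"
    by (rule Ii_rec[OF s0])
  also have "\<dots> \<le> (\<Sum>k. ennreal (2 * (1-\<rho>)^n) * ennreal (if Suc k \<noteq> x then pp (real k + 1) s * \<phi> (1/(real k + 1 + s)) else 0))"
  proof (rule suminf_le)
    fix k
    have "ennreal (if Suc k \<noteq> x then pp (real k + 1) s else 0) * Ii x n (1/(real k + 1 + s))
        \<le> ennreal (if Suc k \<noteq> x then pp (real k + 1) s else 0) * ennreal (2 * (1-\<rho>)^n * \<phi> (1/(real k + 1 + s)))"
      by (rule mult_left_mono[OF Suc.IH[OF sk]]) simp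
    also have "\<dots> = ennreal (2 * (1-\<rho>)^n) * ennreal (if Suc k \<noteq> x then pp (real k + 1) s * \<phi> (1/(real k + 1 + s)) else 0)"
    proof -
      have p1: "0 \<le> (if Suc k \<noteq> x then pp (real k + 1) s else 0)" using ppn[of k] by simp
      have p2: "0 \<le> 2 * (1-\<rho>)^n * \<phi> (1/(real k + 1 + s))" using c0 phi1[OF sk, of k] by simp
      have p3: "0 \<le> (if Suc k \<noteq> x then pp (real k + 1) s * \<phi> (1/(real k + 1 + s)) else 0)"
        using ppn[of k] phi1[OF sk, of k] by simp
      have "ennreal (if Suc k \<noteq> x then pp (real k + 1) s else 0) * ennreal (2 * (1-\<rho>)^n * \<phi> (1/(real k + 1 + s)))
          = ennreal ((if Suc k \<noteq> x then pp (real k + 1) s else 0) * (2 * (1-\<rho>)^n * \<phi> (1/(real k + 1 + s))))"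
        using p1 p2 by (rule ennreal_mult[symmetric])
      also have "\<dots> = ennreal ((2 * (1-\<rho>)^n) * (if Suc k \<noteq> x then pp (real k + 1) s * \<phi> (1/(real k + 1 + s)) else 0))"
        by (intro arg_cong[where f=ennreal]) simp
      also have "\<dots> = ennreal (2 * (1-\<rho>)^n) * ennreal (if Suc k \<noteq> x then pp (real k + 1) s * \<phi> (1/(real k + 1 + s)) else 0)"
        using c0 p3 by (rule ennreal_mult)
      finally show ?thesis .
    qed
    finally show "ennreal (if Suc k \<noteq> x then pp (real k + 1) s else 0) * Ii x n (1/(real k + 1 + s))
        \<le> ennreal (2 * (1-\<rho>)^n) * ennreal (if Suc k \<noteq> x then pp (real k + 1) s * \<phi> (1/(real k + 1 + s)) else 0)" .
  qed (rule summableI)+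
  also have "\<dots> = ennreal (2 * (1-\<rho>)^n) * (\<Sum>k. ennreal (if Suc k \<noteq> x then pp (real k + 1) s * \<phi> (1/(real k + 1 + s)) else 0))"
    by (rule ennreal_suminf_cmult)
  also have "\<dots> \<le> ennreal (2 * (1-\<rho>)^n) * ennreal ((1-\<rho>) * \<phi> s)"
    by (rule mult_left_mono[OF step[OF Suc.prems]]) simp
  also have "\<dots> = ennreal (2 * (1-\<rho>)^n * ((1-\<rho>) * \<phi> s))"
    using c0 r1 phi1[OF Suc.prems] by (intro ennreal_mult[symmetric]) auto
  also have "\<dots> = ennreal (2 * (1-\<rho>)^Suc n * \<phi> s)" by (simp add: ac_simps)
  finally show ?case .
qed


lemma tend_inv: "(\<lambda>n. 1/(real n + c)) \<longlonglongrightarrow> 0"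
proof -
  have "(\<lambda>n. 1/(real n + c)) = (\<lambda>n. inverse (c + real n))" by (simp add: divide_inverse add.commute)
  moreover have "(\<lambda>n. inverse (c + real n)) \<longlonglongrightarrow> 0"
    by (intro tendsto_inverse_0_at_top filterlim_tendsto_add_at_top[OF tendsto_const] filterlim_real_sequentially)
  ultimately show ?thesis by simp
qed

lemma tele: "(\<lambda>n. 1/(real n + c) - 1/(real (Suc n) + c)) sums (1/c)"
  using telescope_sums'[OF tend_inv[of c]] by simp

lemma aux_b2: "b > 0 \<Longrightarrow> (1+s)/(b*(b+1)) * (1/(1+2*(1/b))) = ((1::real)+s)*(1/(b+1) - 1/(b+2))"
proof -
  assume b: "b > 0"
  have p: "b*(b+1)*(b+2) > 0" "(b+1)*(b+2) > 0" "b + 2 > 0" "b+1>0" using b by auto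
  show ?thesis using p b by (simp add: field_simps)
qed

lemma aux_b3: "b > 0 \<Longrightarrow> (1+s)/(b*(b+1)) * (1/(1+3*(1/b))) = ((1::real)+s)/2*((1/(b+1) - 1/(b+2)) + (1/(b+2) - 1/(b+3)))"
proof -
  assume b: "b > 0"
  have e: "(1/(b+1) - 1/(b+2)) + (1/(b+2) - 1/(b+3)) = 1/(b+1) - 1/(b+3)" by simp
  have p: "b*(b+1)*(b+3) > 0" "(b+1)*(b+3) > 0" "b + 3 > 0" "b+1>0" using b by auto
  show ?thesis unfolding e using p b by (simp add: field_simps)
qed

lemma aux_k2: "s \<ge> 0 \<Longrightarrow> pp (real k + 1) s * (1/(1 + 2*(1/(real k + 1 + s)))) = (1+s) * (1/(real k + (2+s)) - 1/(real (Suc k) + (2+s)))"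
proof -
  assume s: "s \<ge> 0"
  define b where "b = real k + 1 + s"
  have b: "b > 0" using s by (simp add: b_def)
  have e: "real k + (2+s) = b + 1" "real (Suc k) + (2+s) = b + 2" "pp (real k + 1) s = (1+s)/(b*(b+1))"
    by (simp_all add: b_def pp_def add_ac)
  show ?thesis unfolding e b_def[symmetric] by (rule aux_b2[OF b])
qed

lemma aux_k3: "s \<ge> 0 \<Longrightarrow> pp (real k + 1) s * (1/(1 + 3*(1/(real k + 1 + s)))) =
     (1+s)/2 * ((1/(real k + (2+s)) - 1/(real (Suc k) + (2+s))) + (1/(real k + (3+s)) - 1/(real (Suc k) + (3+s))))"
proof -
  assume s: "s \<ge> 0"
  define b where "b = real k + 1 + s"
  have b: "b > 0" using s by (simp add: b_def)
  have e: "real k + (2+s) = b + 1" "real (Suc k) + (2+s) = b + 2" "real k + (3+s) = b + 2" "real (Suc k) + (3+s) = b + 3"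
     "pp (real k + 1) s = (1+s)/(b*(b+1))"
    by (simp_all add: b_def pp_def add_ac)
  show ?thesis unfolding e b_def[symmetric] by (rule aux_b3[OF b])
qed

lemma sum_pp: assumes s: "s \<ge> 0" shows "(\<lambda>k. pp (real k + 1) s) sums 1"
proof -
  have "(\<lambda>k. (1+s) * (1/(real k + (1+s)) - 1/(real (Suc k) + (1+s)))) sums ((1+s) * (1/(1+s)))"
    by (intro sums_mult tele)
  moreover have "pp (real k + 1) s = (1+s) * (1/(real k + (1+s)) - 1/(real (Suc k) + (1+s)))" for k
    using s by (simp add: pp_def field_simps)
  ultimately show ?thesis using s by simp
qed

lemma sum_pp2: assumes s: "s \<ge> 0"
  shows "(\<lambda>k. pp (real k + 1) s * (1/(1 + 2*(1/(real k + 1 + s))))) sums ((1+s)/(2+s))"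
proof -
  have "(\<lambda>k. (1+s) * (1/(real k + (2+s)) - 1/(real (Suc k) + (2+s)))) sums ((1+s) * (1/(2+s)))"
    by (intro sums_mult tele)
  moreover have "pp (real k + 1) s * (1/(1 + 2*(1/(real k + 1 + s)))) = (1+s) * (1/(real k + (2+s)) - 1/(real (Suc k) + (2+s)))" for k
    by (rule aux_k2[OF s])
  ultimately show ?thesis by simp
qed

lemma sum_pp3: assumes s: "s \<ge> 0"
  shows "(\<lambda>k. pp (real k + 1) s * (1/(1 + 3*(1/(real k + 1 + s))))) sums ((1+s)/2*(1/(2+s) + 1/(3+s)))"
proof -
  have A: "(\<lambda>k. 1/(real k + (2+s)) - 1/(real (Suc k) + (2+s))) sums (1/(2+s))" by (rule tele)
  have B: "(\<lambda>k. 1/(real k + (3+s)) - 1/(real (Suc k) + (3+s))) sums (1/(3+s))" by (rule tele)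
  have "(\<lambda>k. (1+s)/2 * ((1/(real k + (2+s)) - 1/(real (Suc k) + (2+s))) + (1/(real k + (3+s)) - 1/(real (Suc k) + (3+s)))))
     sums ((1+s)/2*(1/(2+s) + 1/(3+s)))"
    by (intro sums_mult sums_add A B)
  moreover have "(\<lambda>k. pp (real k + 1) s * (1/(1 + 3*(1/(real k + 1 + s))))) = (\<lambda>k.
     (1+s)/2 * ((1/(real k + (2+s)) - 1/(real (Suc k) + (2+s))) + (1/(real k + (3+s)) - 1/(real (Suc k) + (3+s)))))"
    by (rule ext) (rule aux_k3[OF s])
  ultimately show ?thesis by (simp only:)
qed

lemma ennreal_sum_skip:
  assumes x: "x \<ge> 1" and T0: "\<And>k. T k \<ge> 0" and S: "T sums S"
  shows "(\<Sum>k. ennreal (if Suc k \<noteq> x then T k else 0)) = ennreal (S - T (x - 1))"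
proof -
  have "(\<lambda>k. if k \<in> {x-1} then 0 else T k) sums (S + (\<Sum>n\<in>{x-1}. 0 - T n))"
    by (rule sums_If_finite_set'[OF S]) auto
  moreover have "(\<lambda>k. if k \<in> {x-1} then 0 else T k) = (\<lambda>k. if Suc k \<noteq> x then T k else 0)"
    using x by (auto simp: fun_eq_iff)
  ultimately have sm: "(\<lambda>k. if Suc k \<noteq> x then T k else 0) sums (S - T (x-1))" by simp
  have "(\<Sum>k. ennreal (if Suc k \<noteq> x then T k else 0)) = ennreal (\<Sum>k. (if Suc k \<noteq> x then T k else 0))"
    by (rule suminf_ennreal2) (use sm T0 in \<open>auto simp: sums_iff\<close>)
  then show ?thesis using sm by (simp add: sums_iff)
qed


definition gg :: "real \<Rightarrow> real" where "gg u = 24/5/(1+2 * u) - 17/5/(1+3 * u)"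
definition Pg :: "real \<Rightarrow> real" where "Pg s = 24/5 * ((1+s)/(2+s)) - 17/5 * ((1+s)/2 * (1/(2+s) + 1/(3+s)))"

lemma gg_nonneg: "u \<ge> 0 \<Longrightarrow> gg u \<ge> 0"
proof -
  assume u: "u \<ge> 0"
  have "17/5/(1+3 * u) \<le> 24/5/(1+2 * u)" using u by (simp add: field_simps)
  then show ?thesis by (simp add: gg_def)
qed

lemma frac2_le: "(a::real) > 0 \<Longrightarrow> b > 0 \<Longrightarrow> (c1/a - c2/b \<le> K) = (c1 * b - c2 * a \<le> K * (a * b))"
  by (simp add: field_simps)

lemma gg_le: "u \<ge> 0 \<Longrightarrow> gg u \<le> 3/2"
proof -
  assume u: "u \<ge> 0"
  have q: "0 \<le> 1 - u + 90 * u ^ 2"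
  proof -
    have "0 \<le> (u - 1/180) ^ 2 * 90 + (1 - 1/360)" by simp
    also have "\<dots> = 1 - u + 90 * u ^ 2" by (simp add: power2_eq_square algebra_simps)
    finally show ?thesis .
  qed
  have e: "3/2 * ((1+2 * u) * (1+3 * u)) - (24/5 * (1+3 * u) - 17/5 * (1+2 * u)) = (1 - u + 90 * u ^ 2)/10"
    by (simp add: field_simps power2_eq_square)
  have "24/5 * (1+3 * u) - 17/5 * (1+2 * u) \<le> 3/2 * ((1+2 * u) * (1+3 * u))"
  proof -
    have "0 \<le> (1 - u + 90 * u ^ 2)/10" using q by simp
    then have "0 \<le> 3/2 * ((1+2 * u) * (1+3 * u)) - (24/5 * (1+3 * u) - 17/5 * (1+2 * u))" unfolding e .
    then show ?thesis by (simp only: diff_ge_0_iff_ge)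
  qed
  then show ?thesis unfolding gg_def using u by (subst frac2_le) auto
qed

lemma polyN: "s \<ge> 0 \<Longrightarrow> 0 \<le> 1 + 78 * s - 237 * s ^ 2 + 48 * s ^ 3 + 242 * s ^ 4 + 60 * (s::real) ^ 5"
proof -
  assume s: "s \<ge> 0"
  define c :: real where "c = 51/100"
  define d :: real where "d = 7371/6050"
  have r: "242 * s ^ 3 + 48 * s ^ 2 - 237 * s + 78 = 242 * ((s-c) ^ 2 * (s+d)) + 3963/5000 * s + 328029/250000"
    unfolding c_def d_def by (simp add: power2_eq_square power3_eq_cube algebra_simps)
  have "0 \<le> (s-c) ^ 2 * (s+d)" using s by (simp add: d_def)
  then have r0: "0 \<le> 242 * s ^ 3 + 48 * s ^ 2 - 237 * s + 78" unfolding r using s by simp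
  have "1 + 78 * s - 237 * s ^ 2 + 48 * s ^ 3 + 242 * s ^ 4 + 60 * s ^ 5 = 1 + s*(242 * s ^ 3 + 48 * s ^ 2 - 237 * s + 78) + 60 * s ^ 5"
    by (simp add: algebra_simps power2_eq_square power3_eq_cube numeral_eq_Suc)
  moreover have "0 \<le> s*(242 * s ^ 3 + 48 * s ^ 2 - 237 * s + 78)" using s r0 by simp
  ultimately show ?thesis using s by simp
qed

lemma F_atoms:
  fixes A B C D s :: real
  assumes "A \<noteq> 0" "B \<noteq> 0" "C \<noteq> 0" "D \<noteq> 0"
  shows "24/5/A - 17/5/B - (24/5 * ((1+s)/C) - 17/5 * ((1+s)/2 * (1/C + 1/D))) + 1 + s - 7/5
   = (24/5 * B * C * D - 17/5 * A * C * D - 24/5 * (1+s) * A * B * D + 17/5 * (1+s)/2 * (A * B * D + A * B * C) + (1+s-7/5) * A * B * C * D) / (A * B * C * D)"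
  using assms by (simp add: field_simps)

lemma F_bound: assumes s: "s \<ge> 0" shows "gg s - Pg s + 1 + s \<ge> 7/5"
proof -
  have p: "1+2 * s > 0" "1+3 * s > 0" "2+s > 0" "3+s>0" using s by auto
  have num: "24/5 * (1+3 * s) * (2+s) * (3+s) - 17/5 * (1+2 * s) * (2+s) * (3+s) - 24/5 * (1+s) * (1+2 * s) * (1+3 * s) * (3+s)
      + 17/5 * (1+s)/2 * ((1+2 * s) * (1+3 * s) * (3+s) + (1+2 * s) * (1+3 * s) * (2+s)) + (1+s-7/5) * (1+2 * s) * (1+3 * s) * (2+s) * (3+s)
    = (1 + 78 * s - 237 * s ^ 2 + 48 * s ^ 3 + 242 * s ^ 4 + 60 * s ^ 5) / 10"
    by (simp add: field_simps eval_nat_numeral)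
  have "gg s - Pg s + 1 + s - 7/5 = ((1 + 78 * s - 237 * s ^ 2 + 48 * s ^ 3 + 242 * s ^ 4 + 60 * s ^ 5) / 10) / ((1+2 * s) * (1+3 * s) * (2+s) * (3+s))"
    unfolding gg_def Pg_def F_atoms[of "1+2 * s" "1+3 * s" "2+s" "3+s" s, OF p(1)[THEN less_imp_neq, symmetric] p(2)[THEN less_imp_neq, symmetric] p(3)[THEN less_imp_neq, symmetric] p(4)[THEN less_imp_neq, symmetric]]
    unfolding num by (simp add: mult.assoc)
  moreover have "0 \<le> ((1 + 78 * s - 237 * s ^ 2 + 48 * s ^ 3 + 242 * s ^ 4 + 60 * s ^ 5) / 10) / ((1+2 * s) * (1+3 * s) * (2+s) * (3+s))"
    using polyN[OF s] p by simp
  ultimately show ?thesis by linarith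
qed


lemma pp_ge: assumes y: "y \<ge> 1" and s: "s \<in> {0..1}"
  shows "pp y s \<ge> (1+s)/((y+1)*(y+2))"
proof -
  have "(y+s)*(y+1+s) \<le> (y+1)*(y+2)" using y s by (intro mult_mono) auto
  moreover have "0 < (y+s)*(y+1+s)" using y s by auto
  ultimately show ?thesis unfolding pp_def using s by (intro divide_left_mono) auto
qed

lemma l1: "(p::real) * (1 + (a/A - b/B)/X) = p + (a/X)*(p*(1/A)) - (b/X)*(p*(1/B))"
  by (simp add: divide_inverse ring_distribs mult_ac)

lemma l2: "1 + (a/X) * u - (b/X) * v = 1 + (a * u - b * (v::real))/X"
  by (simp add: divide_inverse ring_distribs mult_ac)

definition phiL :: "real \<Rightarrow> real \<Rightarrow> real" where "phiL X u = 1 + gg u / X"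

lemma T_sums:
  assumes s: "s \<ge> 0"
  shows "(\<lambda>k. pp (real k + 1) s * phiL X (1/(real k + 1 + s))) sums (1 + Pg s / X)"
proof -
  have e: "pp (real k + 1) s * phiL X (1/(real k + 1 + s)) =
     pp (real k + 1) s + (24/5/X) * (pp (real k + 1) s * (1/(1 + 2 * (1/(real k + 1 + s)))))
       - (17/5/X) * (pp (real k + 1) s * (1/(1 + 3 * (1/(real k + 1 + s)))))" for k
    unfolding phiL_def gg_def by (rule l1)
  have S1: "(\<lambda>k. pp (real k + 1) s + (24/5/X) * (pp (real k + 1) s * (1/(1 + 2 * (1/(real k + 1 + s)))))
       - (17/5/X) * (pp (real k + 1) s * (1/(1 + 3 * (1/(real k + 1 + s))))))
     sums (1 + (24/5/X) * ((1+s)/(2+s)) - (17/5/X) * ((1+s)/2 * (1/(2+s) + 1/(3+s))))"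
    by (intro sums_add sums_diff sums_mult sum_pp sum_pp2 sum_pp3 s)
  have E2: "1 + (24/5/X) * ((1+s)/(2+s)) - (17/5/X) * ((1+s)/2 * (1/(2+s) + 1/(3+s))) = 1 + Pg s / X"
    unfolding Pg_def by (rule l2)
  from S1 have "(\<lambda>k. pp (real k + 1) s + (24/5/X) * (pp (real k + 1) s * (1/(1 + 2 * (1/(real k + 1 + s)))))
       - (17/5/X) * (pp (real k + 1) s * (1/(1 + 3 * (1/(real k + 1 + s)))))) sums (1 + Pg s / X)"
    by (simp only: E2)
  then show ?thesis by (simp only: e)
qed


lemma key_real:
  fixes y s :: real
  assumes y: "y \<ge> 2000" and s: "s \<in> {0..1}"
  shows "1 + Pg s / y^2 - pp y s * phiL (y^2) (1/(y+s)) \<le> (1 - (279/200) / y^2) * phiL (y^2) s"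
proof -
  define X where "X = y^2"
  define Q where "Q = (1+s)/((y+1)*(y+2))"
  define P where "P = Pg s"
  define G where "G = gg s"
  define r :: real where "r = 279/200"
  have s0: "0 \<le> s" "s \<le> 1" using s by auto
  have X: "X \<ge> 4000000" unfolding X_def using power_mono[OF y, of 2] by simp
  have Xp: "X > 0" using X by simp
  have G0: "0 \<le> G" "G \<le> 3/2" unfolding G_def using gg_nonneg gg_le s0 by auto
  have Fb: "G - P + 1 + s \<ge> 7/5" unfolding G_def P_def using F_bound s0 by simp
  have ratio: "y^2/((y+1)*(y+2)) \<ge> 1 - 3/2000"
  proof -
    have d: "(y+1)*(y+2) > 0" using y by simp
    have h1: "y * 2000 \<le> y * y" using y by (intro mult_left_mono) auto
    have h2: "1997*((y+1)*(y+2)) = 1997*(y*y) + 5991*y + 3994" by (simp add: algebra_simps)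
    have "1997*((y+1)*(y+2)) \<le> 2000*(y*y)" using h1 h2 y by linarith
    then have "(1997/2000)*((y+1)*(y+2)) \<le> y^2" by (simp add: power2_eq_square)
    then have "1997/2000 \<le> y^2/((y+1)*(y+2))" using d by (simp add: le_divide_eq)
    then show ?thesis by simp
  qed
  have XQ: "X * Q \<ge> (1+s) - 3/1000"
  proof -
    have "X * Q = (1+s) * (y^2/((y+1)*(y+2)))" unfolding X_def Q_def by simp
    also have "\<dots> \<ge> (1+s) * (1 - 3/2000)" using ratio s0 by (intro mult_left_mono) auto
    finally have "(1+s) * (1 - 3/2000) \<le> X * Q" .
    moreover have "(1+s) * (1 - 3/2000) = 1997/2000 + (1997/2000) * s" by (simp add: algebra_simps)
    ultimately show ?thesis using s0 by linarith
  qed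
  have rG: "r * G / X \<le> 1/1000"
  proof -
    have "r * G \<le> 3" using G0 unfolding r_def by simp
    then have "r * G / X \<le> 3 / X" using Xp by (simp add: divide_right_mono)
    also have "3 / X \<le> 1/1000" using X by (simp add: field_simps)
    finally show ?thesis .
  qed
  have A: "P - X * Q \<le> G - r - r * G / X" using Fb XQ rG unfolding r_def by linarith
  have B: "P / X - Q \<le> G / X - r / X - r * G / X / X"
  proof -
    have "(P - X * Q) / X \<le> (G - r - r * G / X) / X" using A Xp by (simp add: divide_right_mono)
    moreover have "(P - X * Q) / X = P / X - Q" using Xp by (simp add: field_simps)
    moreover have "(G - r - r * G / X) / X = G / X - r / X - r * G / X / X" by (simp add: diff_divide_distrib)
    ultimately show ?thesis by simp
  qed
  have Q0: "Q \<ge> 0" unfolding Q_def using s0 y by simp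
  have pq: "pp y s \<ge> Q" unfolding Q_def using pp_ge[of y s] y s by simp
  have ph1: "phiL X (1/(y+s)) \<ge> 1" unfolding phiL_def using gg_nonneg[of "1/(y+s)"] y s0 Xp by simp
  have C: "pp y s * phiL X (1/(y+s)) \<ge> Q"
  proof -
    have "pp y s * 1 \<le> pp y s * phiL X (1/(y+s))" using ph1 pq Q0 by (intro mult_left_mono) auto
    then show ?thesis using pq by simp
  qed
  have D: "(1 - r / X) * phiL X s = 1 + G / X - r / X - r * G / X / X"
    unfolding phiL_def G_def by (simp add: algebra_simps)
  show ?thesis using B C D unfolding X_def[symmetric] P_def[symmetric] r_def[symmetric] by linarith
qed


lemma sets_gauss[simp]: "sets gauss_measure = sets borel"
  by (simp add: gauss_measure_def)

lemma gauss_emeasure: "A \<in> sets borel \<Longrightarrow> emeasure gauss_measure A =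
   (\<integral>\<^sup>+w. ennreal (indicator {0<..<1} w / (ln 2 * (1 + w))) * indicator A w \<partial>lborel)"
  unfolding gauss_measure_def by (subst emeasure_density) auto

lemma irr_sets: "({0<..<1::real} - \<rat>) \<in> sets borel"
proof -
  have "(\<rat>::real set) \<in> sets lborel" by (rule null_setsD2[OF countable_imp_null_set_lborel[OF countable_rat]])
  then show ?thesis by simp
qed

lemma gauss_irr: "emeasure gauss_measure ({0<..<1} - \<rat>) = 1"
proof -
  define f where "f w = 1 / (ln 2 * (1 + w))" for w :: real
  have fi: "(f has_integral 1) {0..1}"
  proof -
    have "(f has_integral (ln (1+1) / ln 2 - ln (1+0) / ln 2)) {0..1}"
    proof (rule fundamental_theorem_of_calculus)
      fix x :: real assume x: "x \<in> {0..1}"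
      have "((\<lambda>w. ln (1+w) / ln 2) has_real_derivative (1/(1+x) / ln 2)) (at x within {0..1})"
        using x by (auto intro!: derivative_eq_intros)
      then show "((\<lambda>w. ln (1+w) / ln 2) has_vector_derivative f x) (at x within {0..1})"
        unfolding f_def has_real_derivative_iff_has_vector_derivative[symmetric] by (simp add: field_simps)
    qed simp
    then show ?thesis by simp
  qed
  have "emeasure gauss_measure ({0<..<1} - \<rat>) = (\<integral>\<^sup>+w. ennreal (f w) * indicator {0..1} w \<partial>lborel)"
    unfolding gauss_emeasure[OF irr_sets]
  proof (rule nn_integral_cong_AE)
    have "AE w in lborel. w \<notin> \<rat>"
      by (rule AE_not_in[OF countable_imp_null_set_lborel[OF countable_rat]])
    then show "AE w in lborel. ennreal (indicator {0<..<1} w / (ln 2 * (1 + w))) * indicator ({0<..<1} - \<rat>) w =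
        ennreal (f w) * indicator {0..1} w"
    proof (rule AE_mp, intro AE_I2 impI)
      fix w :: real assume "w \<notin> \<rat>"
      then have "w \<noteq> 0" "w \<noteq> 1" by auto
      then show "ennreal (indicator {0<..<1} w / (ln 2 * (1 + w))) * indicator ({0<..<1} - \<rat>) w =
        ennreal (f w) * indicator {0..1} w" using \<open>w \<notin> \<rat>\<close> by (auto simp: indicator_def f_def)
    qed
  qed
  also have "\<dots> = ennreal 1"
    by (rule nn_integral_has_integral_lebesgue'[OF _ fi]) (auto simp: f_def)
  finally show ?thesis by simp
qed

lemma gauss_E_le: "emeasure gauss_measure (Eset x n) \<le> ennreal (1 / ln 2) * Ii x n 0"
proof -
  have "emeasure gauss_measure (Eset x n) =
     (\<integral>\<^sup>+w. ennreal (indicator {0<..<1} w / (ln 2 * (1 + w))) * indicator (Eset x n) w \<partial>lborel)"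
    by (rule gauss_emeasure[OF Eset_meas])
  also have "\<dots> \<le> (\<integral>\<^sup>+w. ennreal (1 / ln 2) * ennreal (indicator (Eset x n) w * hh 0 w) \<partial>lborel)"
  proof (rule nn_integral_mono)
    fix w
    show "ennreal (indicator {0<..<1} w / (ln 2 * (1 + w))) * indicator (Eset x n) w
        \<le> ennreal (1 / ln 2) * ennreal (indicator (Eset x n) w * hh 0 w)"
    proof (cases "w \<in> Eset x n")
      case True
      then have w: "0 < w" "w < 1" by (auto simp: Eset_def)
      have l2: "ln (2::real) > 0" by simp
      have "ln 2 \<le> ln 2 * (1 + w)" using w l2 by simp
      moreover have "0 < ln 2 * (1 + w) * ln 2" using w l2 by simp
      ultimately have "1 / (ln 2 * (1 + w)) \<le> 1 / ln 2" by (intro divide_left_mono) auto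
      then have "ennreal (1 / (ln 2 * (1 + w))) \<le> ennreal (1 / ln 2)" by (rule ennreal_leI)
      then show ?thesis using True w by (simp add: hh_def)
    qed simp
  qed
  also have "\<dots> = ennreal (1 / ln 2) * Ii x n 0"
    unfolding Ii_def by (rule nn_integral_cmult) (unfold hh_def, measurable)
  finally show ?thesis .
qed

lemma Ii_large:
  assumes x: "x \<ge> 2000"
  shows "Ii x n 0 \<le> ennreal (2 * (1 - (279/200) / (real x)^2)^n * phiL ((real x)^2) 0)"
proof -
  define X where "X = (real x)^2"
  have X: "X \<ge> 4000000" unfolding X_def using power_mono[of 2000 "real x" 2] x by simp
  show ?thesis unfolding X_def[symmetric]
  proof (rule Ii_bound)
    show "1 \<le> phiL X s" if "s \<in> {0..1}" for s
      unfolding phiL_def using gg_nonneg[of s] that X by simp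
    show "0 \<le> (279/200) / X" using X by simp
    show "(279/200) / X \<le> 1" using X by simp
    show "(0::real) \<in> {0..1}" by simp
    fix s :: real assume s: "s \<in> {0..1}"
    have s0: "s \<ge> 0" using s by simp
    have T0: "0 \<le> pp (real k + 1) s * phiL X (1/(real k + 1 + s))" for k
    proof -
      have "0 \<le> pp (real k + 1) s" using s0 by (simp add: pp_def)
      moreover have "0 \<le> phiL X (1/(real k + 1 + s))" unfolding phiL_def using gg_nonneg[of "1/(real k + 1 + s)"] s0 X by simp
      ultimately show ?thesis by simp
    qed
    have x1: "x \<ge> 1" using x by simp
    have "(\<Sum>k. ennreal (if Suc k \<noteq> x then pp (real k + 1) s * phiL X (1/(real k + 1 + s)) else 0))
       = ennreal (1 + Pg s / X - pp (real (x-1) + 1) s * phiL X (1/(real (x-1) + 1 + s)))"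
      by (rule ennreal_sum_skip[OF x1 T0 T_sums[OF s0]])
    also have "real (x-1) + 1 = real x" using x1 by (simp add: of_nat_diff)
    also have "ennreal (1 + Pg s / X - pp (real x) s * phiL X (1/(real x + s))) \<le> ennreal ((1 - (279/200) / X) * phiL X s)"
      using key_real[of "real x" s] x s unfolding X_def by (intro ennreal_leI) simp
    finally show "(\<Sum>k. ennreal (if Suc k \<noteq> x then pp (real k + 1) s * phiL X (1/(real k + 1 + s)) else 0))
       \<le> ennreal ((1 - (279/200) / X) * phiL X s)" .
  qed
qed

lemma Ii_small:
  assumes x: "x \<ge> 1"
  shows "Ii x n 0 \<le> ennreal (2 * (1 - 1 / ((real x + 1) * (real x + 2)))^n * 1)"
proof (rule Ii_bound[where \<phi>="\<lambda>_. 1"])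
  show "0 \<le> 1 / ((real x + 1) * (real x + 2))" by simp
  show "1 / ((real x + 1) * (real x + 2)) \<le> 1"
  proof -
    have "(1::real) * 1 \<le> (real x + 1) * (real x + 2)" by (intro mult_mono) auto
    then show ?thesis by simp
  qed
  show "(0::real) \<in> {0..1}" by simp
  show "1 \<le> (1::real)" by simp
  fix s :: real assume s: "s \<in> {0..1}"
  have s0: "s \<ge> 0" using s by simp
  have T0: "0 \<le> pp (real k + 1) s * 1" for k using s0 by (simp add: pp_def)
  have "(\<Sum>k. ennreal (if Suc k \<noteq> x then pp (real k + 1) s * 1 else 0))
       = ennreal (1 - pp (real (x-1) + 1) s * 1)"
    by (rule ennreal_sum_skip[OF x T0]) (use sum_pp[OF s0] in simp)
  also have "real (x-1) + 1 = real x" using x by (simp add: of_nat_diff)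
  also have "ennreal (1 - pp (real x) s * 1) \<le> ennreal ((1 - 1 / ((real x + 1) * (real x + 2))) * 1)"
  proof (intro ennreal_leI)
    have "pp (real x) s \<ge> (1+s)/((real x + 1) * (real x + 2))" using pp_ge[of "real x" s] x s by simp
    moreover have "(1+s)/((real x + 1) * (real x + 2)) \<ge> 1/((real x + 1) * (real x + 2))"
      using s0 by (intro divide_right_mono) auto
    ultimately show "1 - pp (real x) s * 1 \<le> (1 - 1 / ((real x + 1) * (real x + 2))) * 1" by simp
  qed
  finally show "(\<Sum>k. ennreal (if Suc k \<noteq> x then pp (real k + 1) s * 1 else 0))
       \<le> ennreal ((1 - 1 / ((real x + 1) * (real x + 2))) * 1)" .
qed


lemma ln2_lower: "ln (2::real) \<ge> 689/1000"
proof -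
  have e: "exp (689/64000::real) \<le> 64000/63311"
  proof -
    have "1 - 689/64000 \<le> exp (- (689/64000::real))" using exp_ge_add_one_self[of "-(689/64000)"] by simp
    then have "exp (689/64000::real) * (1 - 689/64000) \<le> exp (689/64000) * exp (-(689/64000))"
      by (intro mult_left_mono) auto
    also have "\<dots> = 1" by (simp add: exp_minus)
    finally show ?thesis by (simp add: field_simps)
  qed
  have "exp (689/1000::real) = exp (689/64000) ^ 64" by (simp add: exp_of_nat_mult[symmetric])
  also have "\<dots> \<le> (64000/63311) ^ 64" by (intro power_mono e) simp
  also have "\<dots> \<le> (2::real)" by (simp add: power_divide)
  finally show ?thesis by (subst ln_ge_iff) auto
qed

lemma ln2_upper: "ln (2::real) \<le> 7/10"
proof -
  have "(1 + 7/640::real) ^ 64 \<le> exp (7/640) ^ 64" by (intro power_mono exp_ge_add_one_self[THEN order_trans]) auto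
  also have "\<dots> = exp (7/10)" by (simp add: exp_of_nat_mult[symmetric])
  finally have "2 \<le> exp (7/10::real)" by (rule order_trans[rotated]) (simp add: power_divide)
  then show ?thesis by (metis exp_le_cancel_iff exp_ln zero_less_numeral)
qed

lemma sqrt_bound: assumes A: "A \<ge> 0" shows "(sqrt A + 1)^2 \<le> 101/100 * A + 101"
proof -
  define t where "t = sqrt A"
  have tA: "t^2 = A" using A unfolding t_def by simp
  have "(t+1)^2 = 101/100 * t^2 + 101 - (t/10 - 10)^2" by (simp add: power2_eq_square field_simps)
  moreover have "0 \<le> (t/10 - 10)^2" by simp
  ultimately have "(t+1)^2 \<le> 101/100 * t^2 + 101" by linarith
  then show ?thesis unfolding tA t_def[symmetric] .
qed

lemma E1: "eventually (\<lambda>n::nat. 6 * exp (-(202/1000) * ln (real n)) \<le> exp (-(2/10) * ln (real n))) sequentially"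
  by real_asymp
lemma E2: "eventually (\<lambda>n::nat. 3 * exp (- real n / (2001*2002)) \<le> exp (-(2/10) * ln (real n))) sequentially"
  by real_asymp
lemma E3: "eventually (\<lambda>n::nat. (101/100 * (1381/200 * real n / ln (real n)) + 101) * (7/10) * (2/10) * ln (real n) \<le> real n) sequentially"
  by real_asymp

lemma pow_exp: assumes "0 \<le> 1 - a" shows "(1 - a)^n \<le> exp (- (a * real n))"
proof -
  have "(1 - a)^n \<le> exp (-a)^n" using assms by (intro power_mono) (use exp_ge_add_one_self[of "-a"] in auto)
  also have "\<dots> = exp (- (a * real n))" by (simp add: exp_of_nat_mult[symmetric] mult.commute)
  finally show ?thesis .
qed

lemma e_bound:
  assumes n3: "n \<ge> 3"
    and e1: "6 * exp (-(202/1000) * ln (real n)) \<le> exp (-(2/10) * ln (real n))"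
    and e2: "3 * exp (- real n / (2001*2002)) \<le> exp (-(2/10) * ln (real n))"
    and x1: "1 \<le> x" and XA: "(real x)^2 \<le> (4 + 2 / ln 2) * real n / ln (real n)"
  shows "measure gauss_measure (Eset x n) \<le> exp (-(2/10) * ln (real n))"
proof -
  have l2: "ln (2::real) \<ge> 689/1000" by (rule ln2_lower)
  have l2p: "ln (2::real) > 0" by simp
  define L where "L = ln (real n)"
  have L0: "L > 0" unfolding L_def using n3 by simp
  define Cc where "Cc = 4 + 2 / ln (2::real)"
  have Cc_le: "Cc \<le> 1381/200"
  proof -
    have "2 / ln (2::real) \<le> 2 / (689/1000)" using l2 by (intro divide_left_mono) auto
    then show ?thesis unfolding Cc_def by simp
  qed
  have Cc0: "Cc > 0" unfolding Cc_def using l2p by (simp add: add_pos_pos)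
  define X where "X = (real x)^2"
  have X1: "X \<ge> 1" unfolding X_def using x1 by simp
  have XA': "X \<le> Cc * real n / L" using XA unfolding X_def Cc_def L_def .
  have nX: "real n / X \<ge> L / Cc"
  proof -
    have "X * L \<le> Cc * real n" using XA' L0 by (simp add: le_divide_eq)
    then show ?thesis using X1 Cc0 L0 by (simp add: field_simps)
  qed
  obtain B where B: "Ii x n 0 \<le> ennreal B" and Bb: "B / ln 2 \<le> exp (-(2/10) * L)" and B0: "B \<ge> 0"
  proof (cases "x \<ge> 2000")
    case True
    define r :: real where "r = 279/200"
    define B where "B = 2 * (1 - r / X)^n * phiL X 0"
    have Ii: "Ii x n 0 \<le> ennreal B" using Ii_large[OF True, of n] unfolding B_def r_def X_def .
    have X2: "X \<ge> 4000000" unfolding X_def using power_mono[of 2000 "real x" 2] True by simp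
    have rX: "0 \<le> 1 - r / X" using X2 unfolding r_def by simp
    have ph: "phiL X 0 \<le> 2" "phiL X 0 \<ge> 0" unfolding phiL_def gg_def using X2 by (simp_all add: field_simps)
    have "(1 - r / X)^n \<le> exp (- (r / X * real n))" by (rule pow_exp[OF rX])
    also have "\<dots> \<le> exp (-(202/1000) * L)"
    proof -
      have "r / X * real n = r * (real n / X)" by simp
      also have "\<dots> \<ge> r * (L / Cc)" using nX unfolding r_def by (intro mult_left_mono) auto
      finally have a: "r / X * real n \<ge> r * (L / Cc)" .
      have "r / Cc \<ge> r / (1381/200)" using Cc_le Cc0 unfolding r_def by (intro divide_left_mono) auto
      then have "r / Cc \<ge> 202/1000" unfolding r_def by simp
      then have "202/1000 * L \<le> r / Cc * L" using L0 by (intro mult_right_mono) auto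
      moreover have "r / Cc * L = r * (L / Cc)" by simp
      ultimately have "r * (L / Cc) \<ge> 202/1000 * L" by simp
      with a have "202/1000 * L \<le> r / X * real n" by linarith
      then show ?thesis by simp
    qed
    finally have pe: "(1 - r / X)^n \<le> exp (-(202/1000) * L)" .
    have B0: "B \<ge> 0" unfolding B_def using rX ph by simp
    have "B \<le> 2 * exp (-(202/1000) * L) * 2" unfolding B_def using pe ph rX
      by (intro mult_mono) auto
    then have "B / ln 2 \<le> 4 * exp (-(202/1000) * L) / ln 2" using l2p by (simp add: divide_right_mono)
    also have "\<dots> \<le> 4 * exp (-(202/1000) * L) / (689/1000)" using l2 by (intro divide_left_mono) auto
    also have "\<dots> \<le> 6 * exp (-(202/1000) * L)" by simp
    also have "\<dots> \<le> exp (-(2/10) * L)" using e1 unfolding L_def .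
    finally show ?thesis using that Ii B0 by blast
  next
    case False
    define \<rho> where "\<rho> = 1 / ((real x + 1) * (real x + 2))"
    define B where "B = 2 * (1 - \<rho>)^n * 1"
    have Ii: "Ii x n 0 \<le> ennreal B" using Ii_small[OF x1, of n] unfolding B_def \<rho>_def .
    have xs: "real x \<le> 2000" using False by simp
    have r1: "\<rho> \<le> 1"
    proof -
      have "(1::real) * 1 \<le> (real x + 1) * (real x + 2)" by (intro mult_mono) auto
      then show ?thesis unfolding \<rho>_def by simp
    qed
    have r0: "\<rho> \<ge> 1 / (2001 * 2002)"
    proof -
      have "(real x + 1) * (real x + 2) \<le> 2001 * 2002" using xs by (intro mult_mono) auto
      then show ?thesis unfolding \<rho>_def by (intro divide_left_mono) auto
    qed
    have "(1 - \<rho>)^n \<le> exp (- (\<rho> * real n))" by (rule pow_exp) (use r1 in simp)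
    also have "\<dots> \<le> exp (- real n / (2001 * 2002))"
    proof -
      have "1 / (2001 * 2002) * real n \<le> \<rho> * real n" using r0 by (intro mult_right_mono) auto
      then show ?thesis by simp
    qed
    finally have pe: "(1 - \<rho>)^n \<le> exp (- real n / (2001 * 2002))" .
    have B0: "B \<ge> 0" unfolding B_def using r1 by simp
    have "B / ln 2 \<le> 2 * exp (- real n / (2001 * 2002)) / ln 2" unfolding B_def using pe l2p by (simp add: divide_right_mono)
    also have "\<dots> \<le> 2 * exp (- real n / (2001 * 2002)) / (689/1000)" using l2 by (intro divide_left_mono) auto
    also have "\<dots> \<le> 3 * exp (- real n / (2001 * 2002))" by simp
    also have "\<dots> \<le> exp (-(2/10) * L)" using e2 unfolding L_def .
    finally show ?thesis using that Ii B0 by blast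
  qed
  have "emeasure gauss_measure (Eset x n) \<le> ennreal (1 / ln 2) * Ii x n 0" by (rule gauss_E_le)
  also have "\<dots> \<le> ennreal (1 / ln 2) * ennreal B" using B by (intro mult_left_mono) auto
  also have "\<dots> = ennreal (B / ln 2)" using B0 l2p by (simp add: ennreal_mult[symmetric])
  finally have em: "emeasure gauss_measure (Eset x n) \<le> ennreal (B / ln 2)" .
  then have "emeasure gauss_measure (Eset x n) \<noteq> \<infinity>" using ennreal_less_top[of "B / ln 2"] by (auto simp: top_unique)
  then have "ennreal (measure gauss_measure (Eset x n)) \<le> ennreal (B / ln 2)"
    using em by (simp add: emeasure_eq_ennreal_measure)
  then have "measure gauss_measure (Eset x n) \<le> B / ln 2" using B0 l2p by (simp add: ennreal_le_iff)
  then show ?thesis using Bb unfolding L_def by simp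
qed


lemma q_bound:
  assumes n3: "n \<ge> 3"
    and e3: "(101/100 * (1381/200 * real n / ln (real n)) + 101) * (7/10) * (2/10) * ln (real n) \<le> real n"
    and x1: "1 \<le> x" and xs: "real x \<le> sqrt ((4 + 2 / ln 2) * real n / ln (real n))"
  shows "0 \<le> (1 - pi_cf x)^n" "(1 - pi_cf x)^n \<le> exp (-(2/10) * ln (real n))"
proof -
  have l2: "ln (2::real) \<ge> 689/1000" by (rule ln2_lower)
  have l2u: "ln (2::real) \<le> 7/10" by (rule ln2_upper)
  have l2p: "ln (2::real) > 0" by simp
  define L where "L = ln (real n)"
  have L0: "L > 0" unfolding L_def using n3 by simp
  define Cc where "Cc = 4 + 2 / ln (2::real)"
  have Cc_le: "Cc \<le> 1381/200"
  proof -
    have "2 / ln (2::real) \<le> 2 / (689/1000)" using l2 by (intro divide_left_mono) auto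
    then show ?thesis unfolding Cc_def by simp
  qed
  have Cc0: "Cc > 0" unfolding Cc_def using l2p by (simp add: add_pos_pos)
  define y where "y = 1 / (real x + 1)^2"
  have y0: "y > 0" unfolding y_def by simp
  have y4: "y \<le> 1/4"
  proof -
    have "(2::real)^2 \<le> (real x + 1)^2" using x1 by (intro power_mono) auto
    then show ?thesis unfolding y_def by (simp add: field_simps)
  qed
  have pi_eq: "pi_cf x = - (ln (1 - y) / ln 2)" unfolding pi_cf_def y_def by (simp add: log_def)
  have pi_low: "pi_cf x \<ge> y / ln 2"
  proof -
    have "ln (1 - y) \<le> - y" using y0 y4 by (intro ln_one_minus_pos_upper_bound) auto
    then have "y \<le> - ln (1 - y)" by simp
    then have "y / ln 2 \<le> - ln (1 - y) / ln 2" using l2p by (intro divide_right_mono) auto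
    then show ?thesis unfolding pi_eq by simp
  qed
  have pi_up: "pi_cf x \<le> 1"
  proof -
    have "ln (1/2) \<le> ln (1 - y)" using y4 by (subst ln_le_cancel_iff) auto
    then have "- ln (1 - y) \<le> ln 2" by (simp add: ln_div)
    then have "- ln (1 - y) / ln 2 \<le> ln 2 / ln 2" using l2p by (intro divide_right_mono) auto
    then have "- ln (1 - y) / ln 2 \<le> 1" using l2p by simp
    then show ?thesis unfolding pi_eq by simp
  qed
  show "0 \<le> (1 - pi_cf x)^n" using pi_up by simp
  have "(1 - pi_cf x)^n \<le> exp (- (pi_cf x * real n))" by (rule pow_exp) (use pi_up in simp)
  also have "\<dots> \<le> exp (-(2/10) * L)"
  proof -
    define A where "A = Cc * real n / L"
    have A0: "A \<ge> 0" unfolding A_def using Cc0 L0 by simp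
    have "real x + 1 \<le> sqrt A + 1" using xs unfolding A_def Cc_def L_def by simp
    then have "(real x + 1)^2 \<le> (sqrt A + 1)^2" by (intro power_mono) auto
    also have "\<dots> \<le> 101/100 * A + 101" by (rule sqrt_bound[OF A0])
    also have "\<dots> \<le> 101/100 * (1381/200 * real n / L) + 101"
    proof -
      have "Cc * real n / L \<le> 1381/200 * real n / L" using Cc_le L0 by (intro divide_right_mono mult_right_mono) auto
      then show ?thesis unfolding A_def by simp
    qed
    finally have xb: "(real x + 1)^2 \<le> 101/100 * (1381/200 * real n / L) + 101" .
    have "(real x + 1)^2 * ln 2 * (2/10) * L \<le> (101/100 * (1381/200 * real n / L) + 101) * (7/10) * (2/10) * L"
      using xb l2u l2p L0 by (intro mult_right_mono mult_mono) auto
    also have "\<dots> \<le> real n" using e3 unfolding L_def .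
    finally have k: "(real x + 1)^2 * ln 2 * (2/10) * L \<le> real n" .
    have "(2/10) * L \<le> real n / ((real x + 1)^2 * ln 2)"
      using k l2p by (simp add: le_divide_eq mult_ac)
    also have "\<dots> = y / ln 2 * real n" unfolding y_def by simp
    also have "\<dots> \<le> pi_cf x * real n" using pi_low by (intro mult_right_mono) auto
    finally show ?thesis by simp
  qed
  finally show "(1 - pi_cf x)^n \<le> exp (-(2/10) * ln (real n))" unfolding L_def .
qed

lemma Ncount_iff: "N_count n x w \<ge> 1 \<longleftrightarrow> (\<exists>i\<in>{1..n}. cf_quot i w = x)"
proof -
  have fin: "finite {i \<in> {1..n}. cf_quot i w = x}" by simp
  have "N_count n x w \<ge> 1 \<longleftrightarrow> {i \<in> {1..n}. cf_quot i w = x} \<noteq> {}"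
    unfolding N_count_def using card_eq_0_iff[of "{i \<in> {1..n}. cf_quot i w = x}"] fin by linarith
  then show ?thesis by blast
qed

lemma set_eq: "{w \<in> {0<..<1} - \<rat>. N_count n x w \<ge> 1} = ({0<..<1} - \<rat>) - Eset x n"
  unfolding Ncount_iff Eset_def by blast

theorem lemma7:
  shows "\<exists>N0::nat. \<forall>n\<ge>N0. \<forall>x::nat. 1 \<le> x \<and>
     int x \<le> \<lfloor>sqrt ((4 + 2 / ln 2) * real n / ln (real n))\<rfloor> \<longrightarrow>
     \<bar>measure gauss_measure {w \<in> {0<..<1} - \<rat>. N_count n x w \<ge> 1}
        - (1 - (1 - pi_cf x) ^ n)\<bar> \<le> real n powr (-0.2)"
proof -
  have "eventually (\<lambda>n::nat. (6 * exp (-(202/1000) * ln (real n)) \<le> exp (-(2/10) * ln (real n))) \<and>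
     (3 * exp (- real n / (2001*2002)) \<le> exp (-(2/10) * ln (real n))) \<and>
     ((101/100 * (1381/200 * real n / ln (real n)) + 101) * (7/10) * (2/10) * ln (real n) \<le> real n) \<and> n \<ge> 3) sequentially"
    by (intro eventually_conj E1 E2 E3 eventually_ge_at_top)
  then obtain N0 where N0: "\<And>n. n \<ge> N0 \<Longrightarrow> (6 * exp (-(202/1000) * ln (real n)) \<le> exp (-(2/10) * ln (real n))) \<and>
     (3 * exp (- real n / (2001*2002)) \<le> exp (-(2/10) * ln (real n))) \<and>
     ((101/100 * (1381/200 * real n / ln (real n)) + 101) * (7/10) * (2/10) * ln (real n) \<le> real n) \<and> n \<ge> 3"
    unfolding eventually_sequentially by blast
  show ?thesis
  proof (intro exI[of _ N0] allI impI, elim conjE)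
    fix n x :: nat
    assume n: "n \<ge> N0" and x1: "1 \<le> x" and xf: "int x \<le> \<lfloor>sqrt ((4 + 2 / ln 2) * real n / ln (real n))\<rfloor>"
    note h = N0[OF n]
    have n3: "n \<ge> 3" using h by simp
    have l2p: "ln (2::real) > 0" by simp
    have L0: "ln (real n) > 0" using n3 by simp
    have xs: "real x \<le> sqrt ((4 + 2 / ln 2) * real n / ln (real n))"
      using xf by (simp add: le_floor_iff)
    have A0: "0 \<le> (4 + 2 / ln 2) * real n / ln (real n)" using L0 l2p by simp
    have XA: "(real x)^2 \<le> (4 + 2 / ln 2) * real n / ln (real n)"
    proof -
      have "(real x)^2 \<le> (sqrt ((4 + 2 / ln 2) * real n / ln (real n)))^2" using xs by (intro power_mono) auto
      then show ?thesis using A0 by simp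
    qed
    define P where "P = exp (-(2/10) * ln (real n))"
    define e where "e = measure gauss_measure (Eset x n)"
    define q where "q = (1 - pi_cf x)^n"
    have eP: "e \<le> P" unfolding e_def P_def using e_bound[OF n3 _ _ x1 XA] h by blast
    have e0: "0 \<le> e" unfolding e_def by simp
    have q0: "0 \<le> q" and qP: "q \<le> P" unfolding q_def P_def using q_bound[OF n3 _ x1 xs] h by blast+
    have fin: "emeasure gauss_measure ({0<..<1} - \<rat>) \<noteq> \<infinity>" using gauss_irr by simp
    have M: "measure gauss_measure {w \<in> {0<..<1} - \<rat>. N_count n x w \<ge> 1} = 1 - e"
    proof -
      have "measure gauss_measure (({0<..<1} - \<rat>) - Eset x n) = measure gauss_measure ({0<..<1} - \<rat>) - e"
        unfolding e_def by (rule measure_Diff[OF fin]) (use irr_sets Eset_meas Eset_sub in auto)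
      moreover have "measure gauss_measure ({0<..<1} - \<rat>) = 1" using gauss_irr by (simp add: measure_def)
      ultimately show ?thesis unfolding set_eq by simp
    qed
    have P_eq: "P = real n powr (-0.2)" unfolding P_def using n3 by (simp add: powr_def)
    show "\<bar>measure gauss_measure {w \<in> {0<..<1} - \<rat>. N_count n x w \<ge> 1} - (1 - (1 - pi_cf x) ^ n)\<bar> \<le> real n powr (-0.2)"
      unfolding M q_def[symmetric] P_eq[symmetric] using eP e0 q0 qP by linarith
  qed
qed


end
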